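(* Let $\mathbb{X}$ be a set, $E\subset\mathbb{R}^{\mathbb{X}}$ a real vector subspace, $C=(E\cap[0,\infty)^{\mathbb{X}})\setminus\{0\}$, and $\Pi:E\to E/\mathcal{R}$ the canonical projection, where $f\mathcal{R}g$ iff $f=bg$ for some $b>0$. Let $\bar f\neq\bar g\in\Pi(C)$. Then: (1) there exist $f\in\bar f$, $g\in\bar g$ such that the intersection of the affine line through $f$ and $g$ with $C$ is a line segment $[u,v]$ with $u\neq v$. Fix such $f,g,u,v$. Then: (2) for any $h\in C$ lying in the vector plane spanned by $u$ and $v$ (equivalently by $f$ and $g$), the segment $[u,v]$ meets the vector line $\mathbb{R}h$ in a single point, which belongs to $C$; (3) for any $h\neq0$ in the vector plane spanned by $u,v$, writing $h=h_1u+h_2v$, one has $h\in C$ if and only if $h_1\ge0$ and $h_2\ge0$.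
   Context: Elements of $\Pi(C)$ are open half-lines $\{bf: b>0\}$, $f\in C$. *)

theory Defs
  imports "HOL-Analysis.Analysis"
begin

text \<open>Real-valued functions on a set X (modelled as a type 'x), with pointwise operations.\<close>

definition scal :: "real \<Rightarrow> ('x \<Rightarrow> real) \<Rightarrow> ('x \<Rightarrow> real)" where
  "scal c f = (\<lambda>x. c * f x)"

definition lin_comb :: "real \<Rightarrow> ('x \<Rightarrow> real) \<Rightarrow> real \<Rightarrow> ('x \<Rightarrow> real) \<Rightarrow> ('x \<Rightarrow> real)" where
  "lin_comb a f b g = (\<lambda>x. a * f x + b * g x)"

definition is_subspace :: "('x \<Rightarrow> real) set \<Rightarrow> bool" where
  "is_subspace E \<longleftrightarrow> (\<lambda>x. 0) \<in> E \<and> (\<forall>f\<in>E. \<forall>g\<in>E. (\<lambda>x. f x + g x) \<in> E)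
      \<and> (\<forall>c. \<forall>f\<in>E. scal c f \<in> E)"

definition cone_C :: "('x \<Rightarrow> real) set \<Rightarrow> ('x \<Rightarrow> real) set" where
  "cone_C E = {f \<in> E. \<forall>x. 0 \<le> f x} - {\<lambda>x. 0}"

text \<open>Open half-line {b f : b > 0}, i.e. the equivalence class of f under R.\<close>
definition halfline :: "('x \<Rightarrow> real) \<Rightarrow> ('x \<Rightarrow> real) set" where
  "halfline f = {scal b f | b. b > 0}"

definition Pi_C :: "('x \<Rightarrow> real) set \<Rightarrow> ('x \<Rightarrow> real) set set" where
  "Pi_C E = halfline ` cone_C E"

definition aff_line :: "('x \<Rightarrow> real) \<Rightarrow> ('x \<Rightarrow> real) \<Rightarrow> ('x \<Rightarrow> real) set" where
  "aff_line f g = {lin_comb (1 - t) f t g | t. True}"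

definition seg :: "('x \<Rightarrow> real) \<Rightarrow> ('x \<Rightarrow> real) \<Rightarrow> ('x \<Rightarrow> real) set" where
  "seg u v = {lin_comb (1 - t) u t v | t. 0 \<le> t \<and> t \<le> 1}"

definition vplane :: "('x \<Rightarrow> real) \<Rightarrow> ('x \<Rightarrow> real) \<Rightarrow> ('x \<Rightarrow> real) set" where
  "vplane u v = {lin_comb a u b v | a b. True}"

definition vline :: "('x \<Rightarrow> real) \<Rightarrow> ('x \<Rightarrow> real) set" where
  "vline h = {scal c h | c. True}"

end

theory Submission
  imports Defs
begin

lemma lc_in:
  assumes "is_subspace E" "f \<in> E" "g \<in> E" shows "lin_comb a f b g \<in> E"
proof -
  have "scal a f \<in> E" "scal b g \<in> E" using assms unfolding is_subspace_def by auto
  then have "(\<lambda>x. scal a f x + scal b g x) \<in> E" using assms(1) unfolding is_subspace_def by blast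
  thus ?thesis by (simp add: lin_comb_def scal_def)
qed

lemma part1:
  assumes E: "is_subspace E" and fE: "f \<in> E" and gE: "g \<in> E"
    and fn: "\<forall>x. 0 \<le> f x" and gn: "\<forall>x. 0 \<le> g x"
    and x0: "g x0 > f x0" and y0: "g y0 < f y0"
  shows "\<exists>u v. aff_line f g \<inter> cone_C E = seg u v \<and> u \<noteq> v"
proof -
  define P where "P t = lin_comb (1-t) f t g" for t
  define T where "T = {t. \<forall>x. 0 \<le> (1-t) * f x + t * g x}"
  have ab: "t \<le> f y0 / (f y0 - g y0)" if "t \<in> T" for t
  proof -
    have "0 \<le> (1-t) * f y0 + t * g y0" using that T_def by auto
    then have "t * (f y0 - g y0) \<le> f y0" by (simp add: algebra_simps)
    thus ?thesis using y0 by (simp add: pos_le_divide_eq)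
  qed
  have bb: "- f x0 / (g x0 - f x0) \<le> t" if "t \<in> T" for t
  proof -
    have "0 \<le> (1-t) * f x0 + t * g x0" using that T_def by auto
    then have "- f x0 \<le> t * (g x0 - f x0)" by (simp add: algebra_simps)
    thus ?thesis using x0 by (simp add: divide_simps)
  qed
  have cl: "closed T"
  proof -
    have "T = (\<Inter>x. {t. 0 \<le> (1-t) * f x + t * g x})" unfolding T_def by auto
    moreover have "closed {t::real. 0 \<le> (1-t) * f x + t * g x}" for x
      by (intro closed_Collect_le continuous_intros)
    ultimately show ?thesis by auto
  qed
  have T0: "0 \<in> T" and T1: "1 \<in> T" using fn gn unfolding T_def by auto
  have bdA: "bdd_above T" using ab by (meson bdd_above.I)
  have bdB: "bdd_below T" using bb by (meson bdd_below.I)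
  define t1 where "t1 = Inf T"
  define t2 where "t2 = Sup T"
  have t1T: "t1 \<in> T" unfolding t1_def using closed_contains_Inf[OF _ bdB cl] T0 by auto
  have t2T: "t2 \<in> T" unfolding t2_def using closed_contains_Sup[OF _ bdA cl] T0 by auto
  have le1: "t1 \<le> t" if "t \<in> T" for t unfolding t1_def using that bdB by (simp add: cInf_lower)
  have le2: "t \<le> t2" if "t \<in> T" for t unfolding t2_def using that bdA by (simp add: cSup_upper)
  have t10: "t1 \<le> 0" using le1 T0 by auto
  have t21: "1 \<le> t2" using le2 T1 by auto
  have inT: "t \<in> T" if "t1 \<le> t" "t \<le> t2" for t
    unfolding T_def
  proof (intro CollectI allI)
    fix x
    show "0 \<le> (1-t) * f x + t * g x"
    proof (cases "g x - f x \<ge> 0")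
      case True
      have "0 \<le> (1-t1) * f x + t1 * g x" using t1T T_def by auto
      also have "\<dots> = f x + t1 * (g x - f x)" by algebra
      also have "\<dots> \<le> f x + t * (g x - f x)" using True that by (simp add: mult_right_mono)
      also have "\<dots> = (1-t) * f x + t * g x" by algebra
      finally show ?thesis .
    next
      case False
      have "0 \<le> (1-t2) * f x + t2 * g x" using t2T T_def by auto
      also have "\<dots> = f x + t2 * (g x - f x)" by algebra
      also have "\<dots> \<le> f x + t * (g x - f x)" using False that by (simp add: mult_right_mono_neg)
      also have "\<dots> = (1-t) * f x + t * g x" by algebra
      finally show ?thesis .
    qed
  qed
  have nz: "P t \<noteq> (\<lambda>x. 0)" for t
  proof
    assume "P t = (\<lambda>x. 0)"
    then have h: "\<And>x. (1-t) * f x + t * g x = 0" unfolding P_def lin_comb_def by meson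
    have "f x0 + t * (g x0 - f x0) = 0" using h[of x0] by algebra
    then have "t * (g x0 - f x0) \<le> 0" using fn[rule_format, of x0] by linarith
    then have a: "t \<le> 0" using x0 by (simp add: mult_le_0_iff)
    have "f y0 + t * (g y0 - f y0) = 0" using h[of y0] by algebra
    then have "t * (f y0 - g y0) = f y0" by algebra
    moreover have "f y0 > 0" using y0 gn by (meson le_less_trans)
    ultimately have "t * (f y0 - g y0) > 0" by simp
    then show False using a y0 by (simp add: zero_less_mult_iff)
  qed
  have PE: "P t \<in> E" for t unfolding P_def using lc_in[OF E fE gE] .
  define u where "u = P t1"
  define v where "v = P t2"
  have t12: "t1 < t2" using t10 t21 by auto
  have lcP: "lin_comb (1-s) u s v = P ((1-s)*t1 + s*t2)" for s
    unfolding u_def v_def P_def lin_comb_def by (rule ext) algebra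
  have "aff_line f g \<inter> cone_C E = seg u v"
  proof
    show "aff_line f g \<inter> cone_C E \<subseteq> seg u v"
    proof
      fix w assume w: "w \<in> aff_line f g \<inter> cone_C E"
      then obtain t where wt: "w = P t" unfolding aff_line_def P_def by auto
      have "t \<in> T" using w wt unfolding cone_C_def T_def P_def lin_comb_def by auto
      then have tt: "t1 \<le> t" "t \<le> t2" using le1 le2 by auto
      define s where "s = (t - t1) / (t2 - t1)"
      have s01: "0 \<le> s" "s \<le> 1" using tt t12 unfolding s_def by (auto simp: divide_simps)
      have "s * (t2 - t1) = t - t1" using t12 unfolding s_def by simp
      then have "(1-s)*t1 + s*t2 = t" by algebra
      then have "w = lin_comb (1-s) u s v" using lcP wt by simp
      then show "w \<in> seg u v" unfolding seg_def using s01 by auto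
    qed
  next
    show "seg u v \<subseteq> aff_line f g \<inter> cone_C E"
    proof
      fix w assume "w \<in> seg u v"
      then obtain s where s: "0 \<le> s" "s \<le> 1" "w = lin_comb (1-s) u s v" unfolding seg_def by auto
      define r where "r = (1-s)*t1 + s*t2"
      have wr: "w = P r" using s lcP r_def by simp
      have rr: "r = t1 + s * (t2 - t1)" "r = t2 - (1 - s) * (t2 - t1)" unfolding r_def by algebra+
      have "0 \<le> s * (t2 - t1)" "0 \<le> (1 - s) * (t2 - t1)" using s t12 by simp_all
      then have "t1 \<le> r" "r \<le> t2" using rr by linarith+
      then have "r \<in> T" using inT by auto
      then have "\<forall>x. 0 \<le> w x" using wr unfolding T_def P_def lin_comb_def by auto
      moreover have "w \<in> aff_line f g" using wr unfolding aff_line_def P_def by auto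
      ultimately show "w \<in> aff_line f g \<inter> cone_C E"
        using wr PE nz unfolding cone_C_def by auto
    qed
  qed
  moreover have "u \<noteq> v"
  proof
    assume "u = v"
    then have "(1-t1) * f x0 + t1 * g x0 = (1-t2) * f x0 + t2 * g x0"
      unfolding u_def v_def P_def lin_comb_def by meson
    then have "(t2 - t1) * (g x0 - f x0) = 0" by algebra
    then show False using t12 x0 by simp
  qed
  ultimately show ?thesis by blast
qed

lemma part23:
  assumes E: "is_subspace E" and eq: "aff_line f g \<inter> cone_C E = seg u v" and uv: "u \<noteq> v"
  shows "(\<forall>h \<in> cone_C E. h \<in> vplane u v \<longrightarrow>
             (\<exists>p. seg u v \<inter> vline h = {p} \<and> p \<in> cone_C E))
       \<and> (\<forall>h h1 h2. h \<noteq> (\<lambda>x. 0) \<and> h = lin_comb h1 u h2 v \<longrightarrow>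
             (h \<in> cone_C E \<longleftrightarrow> 0 \<le> h1 \<and> 0 \<le> h2))"
proof -
  have "lin_comb (1-0) u 0 v = u" "lin_comb (1-1) u 1 v = v" by (simp_all add: lin_comb_def)
  then have "u \<in> seg u v" "v \<in> seg u v" unfolding seg_def by (metis (mono_tags, lifting) le_numeral_extra mem_Collect_eq)+
  then have uA: "u \<in> aff_line f g" "u \<in> cone_C E" and vA: "v \<in> aff_line f g" "v \<in> cone_C E"
    using eq by auto
  obtain a where a: "u = lin_comb (1-a) f a g" using uA unfolding aff_line_def by auto
  obtain b where b: "v = lin_comb (1-b) f b g" using vA unfolding aff_line_def by auto
  have uE: "u \<in> E" "\<forall>x. 0 \<le> u x" "u \<noteq> (\<lambda>x. 0)" using uA unfolding cone_C_def by auto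
  have vE: "v \<in> E" "\<forall>x. 0 \<le> v x" "v \<noteq> (\<lambda>x. 0)" using vA unfolding cone_C_def by auto
  have L0: "lin_comb (1-t) u t v \<in> aff_line f g" for t
  proof -
    have "lin_comb (1-t) u t v = lin_comb (1 - ((1-t)*a + t*b)) f ((1-t)*a + t*b) g"
      unfolding a b lin_comb_def by (rule ext) algebra
    thus ?thesis unfolding aff_line_def by blast
  qed
  obtain x1 where x1: "u x1 \<noteq> v x1" using uv by blast
  have inj: "t = s" if "lin_comb (1-t) u t v = lin_comb (1-s) u s v" for t s
  proof -
    have "(1-t) * u x1 + t * v x1 = (1-s) * u x1 + s * v x1" using that unfolding lin_comb_def by meson
    then have "(t - s) * (v x1 - u x1) = 0" by algebra
    thus ?thesis using x1 by simp
  qed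
  have L: "0 \<le> t \<and> t \<le> 1" if "lin_comb (1-t) u t v \<in> cone_C E" for t
  proof -
    have "lin_comb (1-t) u t v \<in> seg u v" using that L0 eq by auto
    then obtain s where "0 \<le> s" "s \<le> 1" "lin_comb (1-t) u t v = lin_comb (1-s) u s v"
      unfolding seg_def by auto
    thus ?thesis using inj by blast
  qed
  have H: "0 \<le> c \<and> 0 \<le> d" if cd: "lin_comb c u d v \<in> cone_C E" "c + d > 0" for c d
  proof -
    define t where "t = d / (c + d)"
    have t1: "1 - t = c/(c+d)" unfolding t_def using cd(2) by (simp add: field_simps)
    have "lin_comb (1-t) u t v = scal (1/(c+d)) (lin_comb c u d v)"
      unfolding t1 unfolding t_def lin_comb_def scal_def by (rule ext) (simp add: algebra_simps)
    moreover have "scal (1/(c+d)) (lin_comb c u d v) \<in> cone_C E"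
    proof -
      have "scal (1/(c+d)) (lin_comb c u d v) \<in> E" using cd E unfolding cone_C_def is_subspace_def by auto
      moreover have "\<forall>x. 0 \<le> scal (1/(c+d)) (lin_comb c u d v) x" using cd unfolding cone_C_def scal_def by auto
      moreover have "scal (1/(c+d)) (lin_comb c u d v) \<noteq> (\<lambda>x. 0)"
      proof
        assume "scal (1/(c+d)) (lin_comb c u d v) = (\<lambda>x. 0)"
        then have "lin_comb c u d v x = 0" for x using cd(2) unfolding scal_def by (metis divide_eq_0_iff mult_eq_0_iff zero_neq_one less_irrefl)
        then show False using cd(1) unfolding cone_C_def by auto
      qed
      ultimately show ?thesis unfolding cone_C_def by auto
    qed
    ultimately have "0 \<le> t \<and> t \<le> 1" using L by simp
    thus ?thesis using cd(2) unfolding t_def by (auto simp: divide_simps)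
  qed
  have P3: "h \<in> cone_C E \<longleftrightarrow> 0 \<le> h1 \<and> 0 \<le> h2" if h: "h \<noteq> (\<lambda>x. 0)" "h = lin_comb h1 u h2 v" for h h1 h2
  proof
    assume hC: "h \<in> cone_C E"
    define c where "c = \<bar>h1\<bar> + \<bar>h2\<bar> + 1"
    have c0: "c > 0" unfolding c_def by simp
    have hn: "\<forall>x. 0 \<le> h x" "h \<in> E" using hC unfolding cone_C_def by auto
    have 1: "lin_comb h1 u (h2 + c) v \<in> cone_C E"
    proof -
      have eq1: "lin_comb h1 u (h2 + c) v = (\<lambda>x. h x + scal c v x)" unfolding h(2) lin_comb_def scal_def by (rule ext) algebra
      have "scal c v \<in> E" using E vE unfolding is_subspace_def by auto
      then have "(\<lambda>x. h x + scal c v x) \<in> E" using E hn unfolding is_subspace_def by auto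
      moreover have "\<forall>x. 0 \<le> h x + scal c v x" using hn vE c0 unfolding scal_def by auto
      moreover have "(\<lambda>x. h x + scal c v x) \<noteq> (\<lambda>x. 0)"
      proof
        assume z: "(\<lambda>x. h x + scal c v x) = (\<lambda>x. 0)"
        have "h x = 0" for x using fun_cong[OF z, of x] hn vE c0 unfolding scal_def
          by (smt (verit) mult_nonneg_nonneg)
        then show False using h(1) by auto
      qed
      ultimately show ?thesis unfolding eq1 cone_C_def by auto
    qed
    have 2: "lin_comb (h1 + c) u h2 v \<in> cone_C E"
    proof -
      have eq1: "lin_comb (h1 + c) u h2 v = (\<lambda>x. h x + scal c u x)" unfolding h(2) lin_comb_def scal_def by (rule ext) algebra
      have "scal c u \<in> E" using E uE unfolding is_subspace_def by auto
      then have "(\<lambda>x. h x + scal c u x) \<in> E" using E hn unfolding is_subspace_def by auto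
      moreover have "\<forall>x. 0 \<le> h x + scal c u x" using hn uE c0 unfolding scal_def by auto
      moreover have "(\<lambda>x. h x + scal c u x) \<noteq> (\<lambda>x. 0)"
      proof
        assume z: "(\<lambda>x. h x + scal c u x) = (\<lambda>x. 0)"
        have "h x = 0" for x using fun_cong[OF z, of x] hn uE c0 unfolding scal_def
          by (smt (verit) mult_nonneg_nonneg)
        then show False using h(1) by auto
      qed
      ultimately show ?thesis unfolding eq1 cone_C_def by auto
    qed
    have "h1 + (h2 + c) > 0" "(h1 + c) + h2 > 0" unfolding c_def by linarith+
    then show "0 \<le> h1 \<and> 0 \<le> h2" using H[OF 1] H[OF 2] by auto
  next
    assume hh: "0 \<le> h1 \<and> 0 \<le> h2"
    have "h \<in> E" using h(2) lc_in[OF E uE(1) vE(1)] by simp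
    moreover have "\<forall>x. 0 \<le> h x" using h(2) hh uE vE unfolding lin_comb_def by auto
    ultimately show "h \<in> cone_C E" using h(1) unfolding cone_C_def by auto
  qed
  have indep: "d1 = 0 \<and> d2 = 0" if d: "\<forall>x. d1 * u x + d2 * v x = 0" for d1 d2
  proof -
    have d2: "d2 = 0"
    proof (rule ccontr)
      assume nz: "d2 \<noteq> 0"
      define l where "l = - 1 / d2"
      have "u = lin_comb (1 + l*d1) u (l*d2) v" unfolding lin_comb_def
      proof (rule ext)
        fix x
        have "(1 + l*d1) * u x + l*d2 * v x = u x + l * (d1 * u x + d2 * v x)" by algebra
        thus "u x = (1 + l*d1) * u x + l*d2 * v x" using d by simp
      qed
      then have "0 \<le> l*d2" using P3[of u] uE uA(2) by blast
      thus False using nz unfolding l_def by simp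
    qed
    obtain x2 where "u x2 \<noteq> 0" using uE(3) by blast
    then have "d1 = 0" using d d2 by (metis add.right_neutral mult_eq_0_iff mult_zero_left)
    thus ?thesis using d2 by simp
  qed
  have P2: "\<exists>p. seg u v \<inter> vline h = {p} \<and> p \<in> cone_C E" if hC: "h \<in> cone_C E" "h \<in> vplane u v" for h
  proof -
    obtain a b where hab: "h = lin_comb a u b v" using hC(2) unfolding vplane_def by auto
    have hnz: "h \<noteq> (\<lambda>x. 0)" using hC unfolding cone_C_def by auto
    have ab: "0 \<le> a" "0 \<le> b" using P3[OF hnz hab] hC by auto
    have abp: "a + b > 0"
    proof (rule ccontr)
      assume "\<not> a + b > 0"
      then have "a = 0" "b = 0" using ab by auto
      then have "h = (\<lambda>x. 0)" using hab unfolding lin_comb_def by simp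
      thus False using hnz by simp
    qed
    define t where "t = b / (a + b)"
    define p where "p = lin_comb (1-t) u t v"
    have t01: "0 \<le> t" "t \<le> 1" unfolding t_def using ab abp by (auto simp: divide_simps)
    have ps: "p \<in> seg u v" unfolding seg_def p_def using t01 by auto
    have t1: "1 - t = a/(a+b)" unfolding t_def using abp by (simp add: field_simps)
    have pl: "p = scal (1/(a+b)) h"
      unfolding p_def t1 unfolding hab t_def lin_comb_def scal_def by (rule ext) (simp add: algebra_simps)
    have pv: "p \<in> vline h" unfolding vline_def pl by auto
    have pC: "p \<in> cone_C E" using ps eq by auto
    have "seg u v \<inter> vline h = {p}"
    proof
      show "{p} \<subseteq> seg u v \<inter> vline h" using ps pv by auto
    next
      show "seg u v \<inter> vline h \<subseteq> {p}"
      proof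
        fix q assume q: "q \<in> seg u v \<inter> vline h"
        then obtain s where s: "q = lin_comb (1-s) u s v" unfolding seg_def by auto
        obtain k where k: "q = scal k h" using q unfolding vline_def by auto
        have "\<forall>x. ((1-s) - k*a) * u x + (s - k*b) * v x = 0"
        proof
          fix x
          have "(1-s) * u x + s * v x = k * (a * u x + b * v x)"
            using s k hab unfolding lin_comb_def scal_def by meson
          thus "((1-s) - k*a) * u x + (s - k*b) * v x = 0" by algebra
        qed
        from indep[OF this] have "(1-s) - k*a = 0" "s - k*b = 0" by simp_all
        then have "k * (a + b) = 1" by algebra
        then have "k = 1/(a+b)" using abp by (simp add: field_simps)
        then show "q \<in> {p}" using k pl by simp
      qed
    qed
    thus ?thesis using pC by blast
  qed
  show ?thesis using P2 P3 by blast
qed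

lemma halfline_eq:
  assumes "c > 0" "f = scal c g" shows "halfline f = halfline g"
proof
  show "halfline f \<subseteq> halfline g"
  proof
    fix w assume "w \<in> halfline f"
    then obtain k where k: "k > 0" "w = scal k f" unfolding halfline_def by auto
    then have "w = scal (k*c) g" using assms unfolding scal_def by auto
    moreover have "k * c > 0" using k assms by simp
    ultimately show "w \<in> halfline g" unfolding halfline_def by blast
  qed
next
  show "halfline g \<subseteq> halfline f"
  proof
    fix w assume "w \<in> halfline g"
    then obtain k where k: "k > 0" "w = scal k g" unfolding halfline_def by auto
    then have "w = scal (k/c) f" using assms unfolding scal_def by auto
    moreover have "k / c > 0" using k assms by simp
    ultimately show "w \<in> halfline f" unfolding halfline_def by blast
  qed
qed

lemma mid: "(r::real) < s \<Longrightarrow> r < (r+s)/2 \<and> (r+s)/2 < s" by (simp add: field_simps)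

lemma choose_b:
  fixes f g :: "'x \<Rightarrow> real"
  assumes fn: "\<forall>x. 0 \<le> f x" and gn: "\<forall>x. 0 \<le> g x" and fnz: "f \<noteq> (\<lambda>x. 0)" and gnz: "g \<noteq> (\<lambda>x. 0)"
    and np: "\<forall>c>0. f \<noteq> scal c g"
  shows "\<exists>b>0. (\<exists>x. b * g x > f x) \<and> (\<exists>y. b * g y < f y)"
proof (cases "\<exists>x0. f x0 > 0 \<and> g x0 > 0")
  case True
  then obtain x0 where x0: "f x0 > 0" "g x0 > 0" by blast
  define b0 where "b0 = f x0 / g x0"
  have b0: "b0 > 0" "b0 * g x0 = f x0" unfolding b0_def using x0 by auto
  then have "f \<noteq> scal b0 g" using np by blast
  then obtain y where y: "b0 * g y \<noteq> f y" unfolding scal_def by fastforce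
  show ?thesis
  proof (cases "b0 * g y > f y")
    case True
    have gy: "g y > 0" using True fn b0 by (metis less_le_trans mult_zero_right not_le order.strict_iff_order gn)
    define b where "b = (f y / g y + b0) / 2"
    have "f y / g y < b0" using True gy by (simp add: divide_simps)
    then have bb: "f y / g y < b \<and> b < b0" unfolding b_def by (rule mid)
    have "b > 0" using bb fn gy by (smt (verit) divide_nonneg_pos)
    moreover have "b * g y > f y" using bb[THEN conjunct1] gy by (simp add: divide_simps)
    moreover have "b * g x0 < f x0" using bb[THEN conjunct2] x0 b0 by (metis mult_strict_right_mono)
    ultimately show ?thesis by blast
  next
    case False
    then have lt: "b0 * g y < f y" using y by auto
    show ?thesis
    proof (cases "g y = 0")
      case True
      have "2*b0 * g x0 > f x0" using b0 x0 by simp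
      moreover have "2*b0 * g y < f y" using True lt by simp
      ultimately show ?thesis using b0 by (metis mult_pos_pos zero_less_numeral)
    next
      case False
      then have gy: "g y > 0" using gn by (simp add: order_neq_le_trans)
      define b where "b = (f y / g y + b0) / 2"
      have "f y / g y > b0" using lt gy by (simp add: divide_simps)
      then have bb: "f y / g y > b \<and> b > b0" unfolding b_def using mid[of b0 "f y / g y"] by (simp add: add.commute)
      have "b > 0" using bb b0 by simp
      moreover have "b * g y < f y" using bb[THEN conjunct1] gy by (simp add: divide_simps)
      moreover have "b * g x0 > f x0" using bb[THEN conjunct2] x0 b0 by (metis mult_strict_right_mono)
      ultimately show ?thesis by blast
    qed
  qed
next
  case False
  obtain x0 where "f x0 \<noteq> 0" using fnz by blast
  then have x0: "f x0 > 0" using fn by (simp add: order_neq_le_trans)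
  then have "\<not> g x0 > 0" using False by blast
  then have gx0: "g x0 = 0" using gn[rule_format, of x0] by linarith
  obtain y where "g y \<noteq> 0" using gnz by blast
  then have y: "g y > 0" using gn by (simp add: order_neq_le_trans)
  then have "\<not> f y > 0" using False by blast
  then have fy: "f y = 0" using fn[rule_format, of y] by linarith
  have "1 * g y > f y" "1 * g x0 < f x0" using x0 gx0 y fy by auto
  then show ?thesis by (metis zero_less_one)
qed

theorem mainTheorem3:
  fixes E :: "('x \<Rightarrow> real) set" and F G :: "('x \<Rightarrow> real) set"
  assumes "is_subspace E"
    and "F \<in> Pi_C E" and "G \<in> Pi_C E" and "F \<noteq> G"
  shows "(\<exists>f g u v. f \<in> F \<and> g \<in> G \<and> aff_line f g \<inter> cone_C E = seg u v \<and> u \<noteq> v)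
    \<and> (\<forall>f g u v. f \<in> F \<and> g \<in> G \<and> aff_line f g \<inter> cone_C E = seg u v \<and> u \<noteq> v \<longrightarrow>
         (\<forall>h \<in> cone_C E. h \<in> vplane u v \<longrightarrow>
             (\<exists>p. seg u v \<inter> vline h = {p} \<and> p \<in> cone_C E))
       \<and> (\<forall>h h1 h2. h \<noteq> (\<lambda>x. 0) \<and> h = lin_comb h1 u h2 v \<longrightarrow>
             (h \<in> cone_C E \<longleftrightarrow> 0 \<le> h1 \<and> 0 \<le> h2)))"
proof
  obtain f0 where f0: "f0 \<in> cone_C E" "F = halfline f0" using assms(2) unfolding Pi_C_def by auto
  obtain g0 where g0: "g0 \<in> cone_C E" "G = halfline g0" using assms(3) unfolding Pi_C_def by auto
  have np: "\<forall>c>0. f0 \<noteq> scal c g0" using halfline_eq f0 g0 assms(4) by blast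
  have f0p: "f0 \<in> E" "\<forall>x. 0 \<le> f0 x" "f0 \<noteq> (\<lambda>x. 0)" using f0 unfolding cone_C_def by auto
  have g0p: "g0 \<in> E" "\<forall>x. 0 \<le> g0 x" "g0 \<noteq> (\<lambda>x. 0)" using g0 unfolding cone_C_def by auto
  obtain b x0 y0 where b: "b > 0" "b * g0 x0 > f0 x0" "b * g0 y0 < f0 y0"
    using choose_b[OF f0p(2) g0p(2) f0p(3) g0p(3) np] by blast
  define g where "g = scal b g0"
  have gE: "g \<in> E" using assms(1) g0p unfolding g_def is_subspace_def by auto
  have gn: "\<forall>x. 0 \<le> g x" using g0p b unfolding g_def scal_def by auto
  have fF: "f0 \<in> F" unfolding f0 halfline_def scal_def by force
  have gG: "g \<in> G" unfolding g0 halfline_def g_def using b by blast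
  obtain u v where "aff_line f0 g \<inter> cone_C E = seg u v \<and> u \<noteq> v"
    using part1[OF assms(1) f0p(1) gE f0p(2) gn, of x0 y0] b unfolding g_def scal_def by auto
  then show "\<exists>f g u v. f \<in> F \<and> g \<in> G \<and> aff_line f g \<inter> cone_C E = seg u v \<and> u \<noteq> v"
    using fF gG by blast
next
  show "\<forall>f g u v. f \<in> F \<and> g \<in> G \<and> aff_line f g \<inter> cone_C E = seg u v \<and> u \<noteq> v \<longrightarrow>
         (\<forall>h \<in> cone_C E. h \<in> vplane u v \<longrightarrow>
             (\<exists>p. seg u v \<inter> vline h = {p} \<and> p \<in> cone_C E))
       \<and> (\<forall>h h1 h2. h \<noteq> (\<lambda>x. 0) \<and> h = lin_comb h1 u h2 v \<longrightarrow>
             (h \<in> cone_C E \<longleftrightarrow> 0 \<le> h1 \<and> 0 \<le> h2))"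
    using part23[OF assms(1)] by blast
qed

end
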